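(* Let $\mathcal{P}$ be a locally geometric poset. If $\mathcal{P}$ has an M-ideal $\mathcal{Q}$ with $\operatorname{rk}(\mathcal{Q})=\operatorname{rk}(\mathcal{P})-1$, then $\mathcal{P}$ is pure, i.e., all maximal elements of $\mathcal{P}$ have the same rank.
   Context: All posets are finite, have a unique minimal element $\hat0$ and are ranked; $\operatorname{rk}$ of a poset is the maximum rank of its elements. $A(\cdot)$ denotes the set of atoms (rank-1 elements). $\bigvee T$ is the set of minimal upper bounds of $T$, $x\vee y=\bigvee\{x,y\}$, and $x\wedge y$ is the meet. A lattice is geometric if $y$ covers $x$ iff there is an atom $a\not\le x$ with $y=x\vee a$; $\mathcal{P}$ is locally geometric if each $\mathcal{P}_{\le x}$ is a geometric lattice. An element $x$ of a geometric lattice $L$ is modular if $x\wedge(y\vee z)=(x\wedge y)\vee z$ for all $z\le x$, $y\in L$. An order ideal is a downward-closed subset; it is pure if all its maximal elements have the same rank and join-closed if $T\subseteq\mathcal{Q}$ implies $\bigvee T\subseteq\mathcal{Q}$. An M-ideal of $\mathcal{P}$ is a pure, join-closed order ideal $\mathcal{Q}$ such that (1) $|a\vee y|\ge1$ for all $y\in\mathcal{Q}$ and $a\in A(\mathcal{P})\setminus A(\mathcal{Q})$, and (2) for every maximal element $x$ of $\mathcal{P}$ there is a maximal element $y$ of $\mathcal{Q}$ that is modular in $\mathcal{P}_{\le x}$. *)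

theory Defs
  imports Main
begin

text \<open>Posets are represented by a finite carrier set P of a type with a partial order.\<close>

definition covers :: "'a::order set \<Rightarrow> 'a \<Rightarrow> 'a \<Rightarrow> bool" where
  "covers P x y \<longleftrightarrow> x \<in> P \<and> y \<in> P \<and> x < y \<and> \<not> (\<exists>z\<in>P. x < z \<and> z < y)"

definition is_bottom :: "'a::order set \<Rightarrow> 'a \<Rightarrow> bool" where
  "is_bottom P z \<longleftrightarrow> z \<in> P \<and> (\<forall>x\<in>P. z \<le> x)"

definition rank :: "'a::order set \<Rightarrow> 'a \<Rightarrow> nat" where
  "rank P x = Max {card C | C. C \<subseteq> {y\<in>P. y \<le> x} \<and> Complete_Partial_Order.chain (\<le>) C} - 1"

definition ranked_poset :: "'a::order set \<Rightarrow> bool" where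
  "ranked_poset P \<longleftrightarrow> finite P \<and> (\<exists>z. is_bottom P z) \<and>
     (\<exists>rk::'a \<Rightarrow> nat. (\<forall>z. is_bottom P z \<longrightarrow> rk z = 0) \<and>
        (\<forall>x y. covers P x y \<longrightarrow> rk y = rk x + 1))"

definition poset_rank :: "'a::order set \<Rightarrow> nat" where
  "poset_rank P = Max (rank P ` P)"

definition atoms :: "'a::order set \<Rightarrow> 'a set" where
  "atoms P = {x\<in>P. rank P x = 1}"

definition maximal_elems :: "'a::order set \<Rightarrow> 'a set" where
  "maximal_elems P = {x\<in>P. \<not> (\<exists>y\<in>P. x < y)}"

definition mub :: "'a::order set \<Rightarrow> 'a set \<Rightarrow> 'a set" where
  "mub P T = {y\<in>P. (\<forall>t\<in>T. t \<le> y) \<and> \<not> (\<exists>z\<in>P. z < y \<and> (\<forall>t\<in>T. t \<le> z))}"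

definition downset :: "'a::order set \<Rightarrow> 'a \<Rightarrow> 'a set" where
  "downset P x = {y\<in>P. y \<le> x}"

definition is_lub :: "'a::order set \<Rightarrow> 'a set \<Rightarrow> 'a \<Rightarrow> bool" where
  "is_lub L S z \<longleftrightarrow> z \<in> L \<and> (\<forall>s\<in>S. s \<le> z) \<and> (\<forall>w\<in>L. (\<forall>s\<in>S. s \<le> w) \<longrightarrow> z \<le> w)"

definition is_glb :: "'a::order set \<Rightarrow> 'a set \<Rightarrow> 'a \<Rightarrow> bool" where
  "is_glb L S z \<longleftrightarrow> z \<in> L \<and> (\<forall>s\<in>S. z \<le> s) \<and> (\<forall>w\<in>L. (\<forall>s\<in>S. w \<le> s) \<longrightarrow> w \<le> z)"

definition is_lattice :: "'a::order set \<Rightarrow> bool" where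
  "is_lattice L \<longleftrightarrow> (\<forall>x\<in>L. \<forall>y\<in>L. (\<exists>z. is_lub L {x, y} z) \<and> (\<exists>z. is_glb L {x, y} z))"

definition ljoin :: "'a::order set \<Rightarrow> 'a \<Rightarrow> 'a \<Rightarrow> 'a" where
  "ljoin L x y = (THE z. is_lub L {x, y} z)"

definition lmeet :: "'a::order set \<Rightarrow> 'a \<Rightarrow> 'a \<Rightarrow> 'a" where
  "lmeet L x y = (THE z. is_glb L {x, y} z)"

definition geometric_lattice :: "'a::order set \<Rightarrow> bool" where
  "geometric_lattice L \<longleftrightarrow> is_lattice L \<and>
     (\<forall>x\<in>L. \<forall>y\<in>L. covers L x y \<longleftrightarrow> (\<exists>a\<in>atoms L. \<not> a \<le> x \<and> y = ljoin L x a))"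

definition locally_geometric :: "'a::order set \<Rightarrow> bool" where
  "locally_geometric P \<longleftrightarrow> ranked_poset P \<and> (\<forall>x\<in>P. geometric_lattice (downset P x))"

definition modular_elem :: "'a::order set \<Rightarrow> 'a \<Rightarrow> bool" where
  "modular_elem L x \<longleftrightarrow> x \<in> L \<and>
     (\<forall>y\<in>L. \<forall>z\<in>L. z \<le> x \<longrightarrow> lmeet L x (ljoin L y z) = ljoin L (lmeet L x y) z)"

definition order_ideal :: "'a::order set \<Rightarrow> 'a set \<Rightarrow> bool" where
  "order_ideal P Q \<longleftrightarrow> Q \<subseteq> P \<and> (\<forall>x\<in>Q. \<forall>y\<in>P. y \<le> x \<longrightarrow> y \<in> Q)"

definition pure :: "'a::order set \<Rightarrow> 'a set \<Rightarrow> bool" where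
  "pure P Q \<longleftrightarrow> (\<forall>x\<in>maximal_elems Q. \<forall>y\<in>maximal_elems Q. rank P x = rank P y)"

definition join_closed :: "'a::order set \<Rightarrow> 'a set \<Rightarrow> bool" where
  "join_closed P Q \<longleftrightarrow> (\<forall>T. T \<subseteq> Q \<longrightarrow> mub P T \<subseteq> Q)"

definition M_ideal :: "'a::order set \<Rightarrow> 'a set \<Rightarrow> bool" where
  "M_ideal P Q \<longleftrightarrow> order_ideal P Q \<and> pure P Q \<and> join_closed P Q \<and>
     (\<forall>y\<in>Q. \<forall>a\<in>atoms P - atoms Q. card (mub P {a, y}) \<ge> 1) \<and>
     (\<forall>x\<in>maximal_elems P. \<exists>y\<in>maximal_elems Q. modular_elem (downset P x) y)"

end

theory Submission
  imports Defs
begin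

lemma rank_cong:
  assumes "{y\<in>A. y \<le> x} = {y\<in>B. y \<le> x}"
  shows "rank A x = rank B x"
  unfolding rank_def using assms by simp

lemma rank_mono:
  assumes fin: "finite P" and "y \<le> x"
  shows "rank P y \<le> rank P x"
proof -
  let ?S = "\<lambda>x. {card C | C. C \<subseteq> {y\<in>P. y \<le> x} \<and> Complete_Partial_Order.chain (\<le>) C}"
  have fx: "finite (?S x)"
  proof -
    have "?S x \<subseteq> card ` Pow P" by auto
    thus ?thesis using fin by (meson finite_Pow_iff finite_imageI finite_subset)
  qed
  have yxs: "{z\<in>P. z \<le> y} \<subseteq> {z\<in>P. z \<le> x}" using assms(2) by (auto intro: order.trans[of _ y x])
  have sub: "?S y \<subseteq> ?S x" using yxs by blast
  have ne: "?S y \<noteq> {}"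
  proof -
    have "{} \<subseteq> {z\<in>P. z \<le> y} \<and> Complete_Partial_Order.chain (\<le>) ({}::'a set)"
      by (simp add: chain_empty)
    hence "card ({}::'a set) \<in> ?S y" by blast
    thus ?thesis by blast
  qed
  have "Max (?S y) \<le> Max (?S x)" using Max_mono[OF sub ne fx] .
  thus ?thesis unfolding rank_def by simp
qed

lemma rank_strict:
  assumes fin: "finite P" and "y < x" and "y \<in> P" and "x \<in> P"
  shows "rank P y < rank P x"
proof -
  let ?S = "\<lambda>x. {card C | C. C \<subseteq> {y\<in>P. y \<le> x} \<and> Complete_Partial_Order.chain (\<le>) C}"
  have fin2: "\<And>x. finite (?S x)"
  proof -
    fix x
    have "?S x \<subseteq> card ` Pow P" by auto
    thus "finite (?S x)" using fin by (meson finite_Pow_iff finite_imageI finite_subset)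
  qed
  have ne: "?S y \<noteq> {}"
  proof -
    have "{} \<subseteq> {z\<in>P. z \<le> y} \<and> Complete_Partial_Order.chain (\<le>) ({}::'a set)"
      by (simp add: chain_empty)
    hence "card ({}::'a set) \<in> ?S y" by blast
    thus ?thesis by blast
  qed
  have "Max (?S y) \<in> ?S y" by (rule Max_in[OF fin2 ne])
  hence "\<exists>C. Max (?S y) = card C \<and> C \<subseteq> {z\<in>P. z \<le> y} \<and> Complete_Partial_Order.chain (\<le>) C"
    by (simp only: mem_Collect_eq)
  then obtain C where C: "C \<subseteq> {z\<in>P. z \<le> y}" "Complete_Partial_Order.chain (\<le>) C" "card C = Max (?S y)"
    by (elim exE conjE) simp
  have one: "1 \<in> ?S y"
  proof -
    have "{y} \<subseteq> {z\<in>P. z \<le> y} \<and> Complete_Partial_Order.chain (\<le>) {y}"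
      using assms by (simp add: Complete_Partial_Order.chain_def)
    then have "card {y} \<in> ?S y" by blast
    then show ?thesis by simp
  qed
  have ge1: "Max (?S y) \<ge> 1" using Max_ge[OF fin2 one] .
  have finC: "finite C" by (rule finite_subset[OF _ fin]) (use C(1) in blast)
  have xC: "x \<notin> C" using C(1) assms(2) by auto
  have ax: "\<forall>a\<in>C. a \<le> x" using C(1) assms(2) by (auto intro: order.trans[of _ y x])
  have "insert x C \<subseteq> {z\<in>P. z \<le> x}" using C(1) ax assms(4) by auto
  moreover have "Complete_Partial_Order.chain (\<le>) (insert x C)"
  proof -
    show ?thesis using C(2) ax unfolding chain_def by blast
  qed
  ultimately have "card (insert x C) \<in> ?S x" by blast
  hence "card (insert x C) \<le> Max (?S x)" by (rule Max_ge[OF fin2[of x]])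
  hence "Max (?S y) + 1 \<le> Max (?S x)" using C(3) finC xC by simp
  thus ?thesis unfolding rank_def using ge1 by simp
qed


lemma lub_unique:
  assumes "is_lub L S z" "is_lub L S z'"
  shows "z = z'"
  using assms unfolding is_lub_def by (meson antisym)

lemma all_in_Q:
  assumes fin: "finite P" and geo: "\<forall>v\<in>P. geometric_lattice (downset P v)"
    and jc: "join_closed P Q" and at: "atoms P \<subseteq> Q"
  shows "v \<in> P \<Longrightarrow> v \<in> Q"
proof (induction "card {u\<in>P. u < v}" arbitrary: v rule: less_induct)
  case less
  show ?case
  proof (cases "\<exists>u\<in>P. u < v")
    case False
    then have "v \<in> mub P {}" using less.prems by (auto simp: mub_def)
    then show ?thesis using jc unfolding join_closed_def by blast
  next
    case True
    let ?B = "{u\<in>P. u < v}"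
    have finB: "finite ?B" using fin by simp
    obtain u0 where "u0 \<in> ?B" using True by blast
    then obtain u where uB: "u \<in> ?B" and umax: "\<forall>b\<in>?B. u \<le> b \<longrightarrow> u = b"
      using finite_has_maximal2[OF finB] by blast
    let ?L = "downset P v"
    have uL: "u \<in> ?L" "v \<in> ?L" using uB less.prems by (auto simp: downset_def)
    have cov: "covers ?L u v"
    proof -
      have "\<not> (\<exists>z\<in>?L. u < z \<and> z < v)"
      proof
        assume "\<exists>z\<in>?L. u < z \<and> z < v"
        then obtain z where "z \<in> P" "u < z" "z < v" by (auto simp: downset_def)
        with umax show False by auto
      qed
      thus ?thesis using uL uB unfolding covers_def by auto
    qed
    have gl: "geometric_lattice ?L" using geo less.prems by blast
    then obtain a where a: "a \<in> atoms ?L" "\<not> a \<le> u" "v = ljoin ?L u a"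
      using uL cov unfolding geometric_lattice_def by blast
    have aL: "a \<in> ?L" using a(1) by (simp add: atoms_def)
    have "rank ?L a = rank P a"
      by (rule rank_cong) (use aL in \<open>auto simp: downset_def intro: order.trans[of _ a v]\<close>)
    hence "a \<in> atoms P" using a(1) aL by (simp add: atoms_def downset_def)
    hence aQ: "a \<in> Q" using at by blast
    have "{w\<in>P. w < u} \<subset> ?B" using uB by (auto intro: less_trans[of _ u v])
    hence "card {w\<in>P. w < u} < card ?B" using finB by (simp add: psubset_card_mono)
    hence uQ: "u \<in> Q" using less.hyps uB by blast
    have ex: "\<exists>z. is_lub ?L {u,a} z"
      using gl uL aL unfolding geometric_lattice_def is_lattice_def by blast
    obtain z0 where z0: "is_lub ?L {u,a} z0" using ex by blast
    have "ljoin ?L u a = z0" unfolding ljoin_def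
      by (rule the_equality[where P="\<lambda>z. is_lub ?L {u,a} z", OF z0]) (rule lub_unique[OF _ z0])
    hence "is_lub ?L {u,a} (ljoin ?L u a)" using z0 by simp
    hence lub: "is_lub ?L {u,a} v" using a(3) by simp
    have "v \<in> mub P {u,a}"
    proof -
      have "u \<le> v" "a \<le> v" using lub by (auto simp: is_lub_def)
      moreover have "\<not> (\<exists>z\<in>P. z < v \<and> (\<forall>t\<in>{u,a}. t \<le> z))"
      proof
        assume "\<exists>z\<in>P. z < v \<and> (\<forall>t\<in>{u,a}. t \<le> z)"
        then obtain z where z: "z \<in> P" "z < v" "u \<le> z" "a \<le> z" by auto
        hence "z \<in> ?L" by (auto simp: downset_def)
        hence "v \<le> z" using lub z unfolding is_lub_def by auto
        thus False using z by auto
      qed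
      ultimately show ?thesis using less.prems by (auto simp: mub_def)
    qed
    moreover have "{u,a} \<subseteq> Q" using uQ aQ by auto
    ultimately show ?thesis using jc unfolding join_closed_def by blast
  qed
qed

theorem lemma4p1:
  fixes P Q :: "'a::order set"
  assumes "locally_geometric P"
    and "M_ideal P Q"
    and "poset_rank Q = poset_rank P - 1"
  shows "pure P P"
proof -
  have finP: "finite P" and geo: "\<forall>v\<in>P. geometric_lattice (downset P v)"
    using assms(1) by (auto simp: locally_geometric_def ranked_poset_def)
  have oi: "order_ideal P Q" and pQ: "pure P Q" and jc: "join_closed P Q"
    and c1: "\<forall>y\<in>Q. \<forall>a\<in>atoms P - atoms Q. card (mub P {a, y}) \<ge> 1"
    and c2: "\<forall>x\<in>maximal_elems P. \<exists>y\<in>maximal_elems Q. modular_elem (downset P x) y"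
    using assms(2) unfolding M_ideal_def by auto
  have QP: "Q \<subseteq> P" using oi by (simp add: order_ideal_def)
  have finQ: "finite Q" using finP QP finite_subset by blast
  have rQ: "\<And>q. q \<in> Q \<Longrightarrow> rank Q q = rank P q"
    by (rule rank_cong) (use oi in \<open>auto simp: order_ideal_def\<close>)
  have key: "rank P x = poset_rank P" if xm: "x \<in> maximal_elems P" for x
  proof -
    have xP: "x \<in> P" using xm by (simp add: maximal_elems_def)
    have xle: "rank P x \<le> poset_rank P"
      unfolding poset_rank_def using finP xP by simp
    obtain y where ym: "y \<in> maximal_elems Q" and ymod: "modular_elem (downset P x) y"
      using c2 xm by blast
    have yx: "y \<le> x" and yQ: "y \<in> Q"
      using ymod ym by (auto simp: modular_elem_def downset_def maximal_elems_def)
    show ?thesis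
    proof (cases "x \<in> Q")
      case True
      have atP: "atoms P \<subseteq> Q"
      proof
        fix a assume aP: "a \<in> atoms P"
        show "a \<in> Q"
        proof (rule ccontr)
          assume naQ: "a \<notin> Q"
          hence "a \<notin> atoms Q" by (simp add: atoms_def)
          hence "card (mub P {a, x}) \<ge> 1" using c1 True aP by blast
          then obtain z where z: "z \<in> mub P {a, x}" by fastforce
          hence "z \<in> P" "x \<le> z" "a \<le> z" by (auto simp: mub_def)
          hence "z = x" using xm by (auto simp: maximal_elems_def)
          hence "a \<le> x" using \<open>a \<le> z\<close> by simp
          moreover have "a \<in> P" using aP by (simp add: atoms_def)
          ultimately have "a \<in> Q" using oi True by (auto simp: order_ideal_def)
          thus False using naQ by simp
        qed
      qed
      have "P \<subseteq> Q" using all_in_Q[OF finP geo jc atP] by blast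
      hence PQ: "P = Q" using QP by blast
      have "poset_rank Q = poset_rank P"
        unfolding poset_rank_def
      proof -
        have "rank Q ` Q = rank P ` P" by (rule image_cong) (use PQ rQ in auto)
        thus "Max (rank Q ` Q) = Max (rank P ` P)" by simp
      qed
      hence "poset_rank P = 0" using assms(3) by simp
      thus ?thesis using xle by simp
    next
      case False
      hence ylx: "y < x" proof -
        have "y \<noteq> x" using yQ False by blast
        thus ?thesis using yx by (simp add: less_le)
      qed
      have rxy: "rank P y < rank P x" using rank_strict[OF finP ylx] yQ QP xP by blast
      have Qne: "Q \<noteq> {}" using yQ by blast
      have "poset_rank Q \<in> rank Q ` Q" unfolding poset_rank_def
        by (rule Max_in) (use finQ Qne in auto)
      then obtain q where qQ: "q \<in> Q" and qr: "rank Q q = poset_rank Q" by auto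
      obtain m where mQ: "m \<in> Q" and qm: "q \<le> m" and mmax: "\<forall>b\<in>Q. m \<le> b \<longrightarrow> m = b"
        using finite_has_maximal2[OF finQ qQ] by blast
      have mm: "m \<in> maximal_elems Q" using mQ mmax by (auto simp: maximal_elems_def)
      have "rank P m = rank P y" using pQ mm ym unfolding pure_def by blast
      moreover have "rank P q \<le> rank P m" using rank_mono[OF finP qm] .
      ultimately have "poset_rank Q \<le> rank P y" using qr rQ[OF qQ] by simp
      thus ?thesis using assms(3) rxy xle by linarith
    qed
  qed
  show ?thesis unfolding pure_def using key by simp
qed

end
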